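(* Let $\lambda^1,\dots,\lambda^M$ be loss functions such that each $\lambda^m$ is proper and $\eta^m$-mixable for some $\eta^m>0$. Consider the multiobjective game with $N$ experts: $L_0^{(m)}:=0$, $L_0^{n,m}:=0$; at each step $t=1,2,\dots$, each Expert $n$ announces $\gamma_t^n\in[0,1]$, Learner announces $\pi_t\in[0,1]$, Reality announces $\omega_t\in\{0,1\}$, and $L_t^{(m)}:=L_{t-1}^{(m)}+\lambda^m(\pi_t,\omega_t)$, $L_t^{n,m}:=L_{t-1}^{n,m}+\lambda^m(\gamma_t^n,\omega_t)$ for all $n,m$. If Learner follows the defensive forecasting algorithm (described in the context), then for all $t$, all $n=1,\dots,N$ and all $m=1,\dots,M$, $$L_t^{(m)}\le L_t^{n,m}+\frac{\ln(MN)}{\eta^m}.$$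
   Context: A loss function is a map $\lambda:[0,1]\times\{0,1\}\to[0,\infty]$ satisfying: (1) $\lambda(\gamma,0)$, $\lambda(\gamma,1)$ continuous in $\gamma\in[0,1]$ (standard topology on $[0,\infty]$); (2) some $\gamma$ has both values finite; (3) no $\gamma$ has both values infinite. Superprediction set: $\Sigma_\lambda=\{(x,y)\in[0,\infty)^2:\exists\gamma\ \lambda(\gamma,0)\le x,\ \lambda(\gamma,1)\le y\}$. $\lambda$ is $\eta$-mixable ($\eta>0$) if $\{(e^{-\eta x},e^{-\eta y}):(x,y)\in\Sigma_\lambda\}$ is convex; proper if $\pi\lambda(\pi,1)+(1-\pi)\lambda(\pi,0)\le\pi\lambda(\pi',1)+(1-\pi)\lambda(\pi',0)$ for all $\pi,\pi'\in[0,1]$. Defensive forecasting algorithm (in this setting): for each pair $(n,m)$ define, after step $t$, $Q^{n,m}_t:=\prod_{s=1}^t\exp\bigl(\eta^m(\lambda^m(\pi_s,\omega_s)-\lambda^m(\gamma_s^n,\omega_s))\bigr)$ (with $Q^{n,m}_0=1$), and $Q_t:=\frac{1}{MN}\sum_{n,m}Q^{n,m}_t$. At step $t$, after reading $\gamma_t^1,\dots,\gamma_t^N$, let $f_t(\pi,\omega)$ be the value $Q_t$ would take if $\pi_t=\pi$ and $\omega_t=\omega$, minus $Q_{t-1}$ (with $\infty-\infty:=0$). If $f_t(0,1)\le0$ predict $\pi_t:=0$; else if $f_t(1,0)\le0$ predict $\pi_t:=1$; otherwise predict any $\pi_t=\pi$ satisfying $f_t(\pi,0)=f_t(\pi,1)$.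 *)

theory Defs
  imports "HOL-Analysis.Analysis"
begin

(* Outcomes {0,1} are encoded as bool: False = 0, True = 1.
   Loss values in [0,\<infinity>] are encoded as ennreal. *)

type_synonym loss = "real \<Rightarrow> bool \<Rightarrow> ennreal"

definition loss_function :: "loss \<Rightarrow> bool" where
  "loss_function lam \<longleftrightarrow>
     continuous_on {0..1} (\<lambda>g. lam g False) \<and>
     continuous_on {0..1} (\<lambda>g. lam g True) \<and>
     (\<exists>g\<in>{0..1}. lam g False < \<infinity> \<and> lam g True < \<infinity>) \<and>
     \<not> (\<exists>g\<in>{0..1}. lam g False = \<infinity> \<and> lam g True = \<infinity>)"

definition superpred :: "loss \<Rightarrow> (real \<times> real) set" where
  "superpred lam = {(x, y). 0 \<le> x \<and> 0 \<le> y \<and>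
     (\<exists>g\<in>{0..1}. lam g False \<le> ennreal x \<and> lam g True \<le> ennreal y)}"

definition mixable :: "real \<Rightarrow> loss \<Rightarrow> bool" where
  "mixable eta lam \<longleftrightarrow> eta > 0 \<and>
     convex ((\<lambda>(x, y). (exp (- eta * x), exp (- eta * y))) ` superpred lam)"

definition proper_loss :: "loss \<Rightarrow> bool" where
  "proper_loss lam \<longleftrightarrow> (\<forall>p\<in>{0..1}. \<forall>p'\<in>{0..1}.
     ennreal p * lam p True + ennreal (1 - p) * lam p False
       \<le> ennreal p * lam p' True + ennreal (1 - p) * lam p' False)"

text \<open>One factor exp(eta (a - b)) of Q, a = Learner's loss, b = Expert's loss,
  with conventions exp(\<infinity>) = \<infinity>, exp(-\<infinity>) = 0, \<infinity> - \<infinity> = 0.\<close>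
definition dfactor :: "real \<Rightarrow> ennreal \<Rightarrow> ennreal \<Rightarrow> ennreal" where
  "dfactor eta a b =
     (if a = \<infinity> \<and> b = \<infinity> then 1
      else if b = \<infinity> then 0
      else if a = \<infinity> then \<infinity>
      else ennreal (exp (eta * (enn2real a - enn2real b))))"

text \<open>Q^{n,m}_t and Q_t, as functions of the whole play (Learner's predictions prd,
  outcomes om, expert predictions gam t n).\<close>
definition Qnm :: "(nat \<Rightarrow> loss) \<Rightarrow> (nat \<Rightarrow> real) \<Rightarrow> (nat \<Rightarrow> nat \<Rightarrow> real)
    \<Rightarrow> (nat \<Rightarrow> real) \<Rightarrow> (nat \<Rightarrow> bool) \<Rightarrow> nat \<Rightarrow> nat \<Rightarrow> nat \<Rightarrow> ennreal" where
  "Qnm lam eta gam prd om t n m =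
     (\<Prod>s\<in>{1..t}. dfactor (eta m) (lam m (prd s) (om s)) (lam m (gam s n) (om s)))"

definition Qt :: "nat \<Rightarrow> nat \<Rightarrow> (nat \<Rightarrow> loss) \<Rightarrow> (nat \<Rightarrow> real) \<Rightarrow> (nat \<Rightarrow> nat \<Rightarrow> real)
    \<Rightarrow> (nat \<Rightarrow> real) \<Rightarrow> (nat \<Rightarrow> bool) \<Rightarrow> nat \<Rightarrow> ennreal" where
  "Qt M N lam eta gam prd om t =
     ennreal (1 / (real M * real N)) *
       (\<Sum>(n, m)\<in>{1..N} \<times> {1..M}. Qnm lam eta gam prd om t n m)"

definition ediff :: "ennreal \<Rightarrow> ennreal \<Rightarrow> ereal" where
  "ediff a b = (if a = \<infinity> \<and> b = \<infinity> then 0 else enn2ereal a - enn2ereal b)"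

definition ft :: "nat \<Rightarrow> nat \<Rightarrow> (nat \<Rightarrow> loss) \<Rightarrow> (nat \<Rightarrow> real) \<Rightarrow> (nat \<Rightarrow> nat \<Rightarrow> real)
    \<Rightarrow> (nat \<Rightarrow> real) \<Rightarrow> (nat \<Rightarrow> bool) \<Rightarrow> nat \<Rightarrow> real \<Rightarrow> bool \<Rightarrow> ereal" where
  "ft M N lam eta gam prd om t p w =
     ediff (Qt M N lam eta gam (prd(t := p)) (om(t := w)) t) (Qt M N lam eta gam prd om (t - 1))"

definition follows_DF :: "nat \<Rightarrow> nat \<Rightarrow> (nat \<Rightarrow> loss) \<Rightarrow> (nat \<Rightarrow> real)
    \<Rightarrow> (nat \<Rightarrow> nat \<Rightarrow> real) \<Rightarrow> (nat \<Rightarrow> real) \<Rightarrow> (nat \<Rightarrow> bool) \<Rightarrow> bool" where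
  "follows_DF M N lam eta gam prd om \<longleftrightarrow> (\<forall>t\<ge>1.
     prd t \<in> {0..1} \<and>
     (let f = ft M N lam eta gam prd om t in
       if f 0 True \<le> 0 then prd t = 0
       else if f 1 False \<le> 0 then prd t = 1
       else f (prd t) False = f (prd t) True))"

end

theory Submission
  imports Defs
begin

lemma key_fin:
  fixes l :: loss
  assumes pr: "proper_loss l" and mx: "mixable eta l"
    and p: "p \<in> {0..1}" and g: "g \<in> {0..1}"
    and a0: "l p False = ennreal a0" and a1: "l p True = ennreal a1"
    and b0: "l g False = ennreal b0" and b1: "l g True = ennreal b1"
    and nn: "a0 \<ge> 0" "a1 \<ge> 0" "b0 \<ge> 0" "b1 \<ge> 0"
  shows "p * exp (eta * (a1 - b1)) + (1 - p) * exp (eta * (a0 - b0)) \<le> 1"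
proof -
  have eta: "eta > 0" using mx by (simp add: mixable_def)
  define F where "F = (\<lambda>(x::real, y::real). (exp (- eta * x), exp (- eta * y)))"
  have cv: "convex (F ` superpred l)" using mx by (simp add: mixable_def F_def)
  define u0 where "u0 = exp (- eta * a0)"
  define u1 where "u1 = exp (- eta * a1)"
  define v0 where "v0 = exp (- eta * b0)"
  define v1 where "v1 = exp (- eta * b1)"
  have pos: "u0 > 0" "u1 > 0" "v0 > 0" "v1 > 0" by (auto simp: u0_def u1_def v0_def v1_def)
  have P: "(u0, u1) \<in> F ` superpred l"
    unfolding F_def u0_def u1_def
    by (rule image_eqI[where x="(a0,a1)"]) (use p a0 a1 nn in \<open>auto simp: superpred_def intro!: bexI[of _ p]\<close>)
  have V: "(v0, v1) \<in> F ` superpred l"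
    unfolding F_def v0_def v1_def
    by (rule image_eqI[where x="(b0,b1)"]) (use g b0 b1 nn in \<open>auto simp: superpred_def intro!: bexI[of _ g]\<close>)
  define h where "h = (\<lambda>t. p * ln ((1 - t) * u1 + t * v1) + (1 - p) * ln ((1 - t) * u0 + t * v0))"
  have hle: "h t \<le> h 0" if t: "t \<in> {0..1}" for t
  proof -
    have "(1 - t) *\<^sub>R (u0, u1) + t *\<^sub>R (v0, v1) \<in> F ` superpred l"
      using t by (intro convexD[OF cv P V]) auto
    then obtain x y where xy: "(x, y) \<in> superpred l"
      and e0: "exp (- eta * x) = (1 - t) * u0 + t * v0"
      and e1: "exp (- eta * y) = (1 - t) * u1 + t * v1"
      by (auto simp: F_def)
    from xy obtain g' where x0: "0 \<le> x" "0 \<le> y" and g': "g' \<in> {0..1}"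
      and lx: "l g' False \<le> ennreal x" and ly: "l g' True \<le> ennreal y"
      by (auto simp: superpred_def)
    have le1: "ennreal p * l p True + ennreal (1 - p) * l p False
          \<le> ennreal p * l g' True + ennreal (1 - p) * l g' False"
      using pr p g' unfolding proper_loss_def by blast
    have le2: "ennreal p * l g' True + ennreal (1 - p) * l g' False \<le> ennreal p * ennreal y + ennreal (1 - p) * ennreal x"
      by (intro add_mono mult_left_mono lx ly) auto
    have E1: "ennreal p * l p True + ennreal (1 - p) * l p False = ennreal (p * a1 + (1 - p) * a0)"
      using p nn by (simp add: a0 a1 ennreal_mult ennreal_plus)
    have E2: "ennreal p * ennreal y + ennreal (1 - p) * ennreal x = ennreal (p * y + (1 - p) * x)"
      using p x0 by (simp add: ennreal_mult ennreal_plus)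
    have "ennreal (p * a1 + (1 - p) * a0) \<le> ennreal (p * y + (1 - p) * x)"
      using order_trans[OF le1 le2] unfolding E1 E2 .
    hence ineq: "p * a1 + (1 - p) * a0 \<le> p * y + (1 - p) * x"
      using p x0 by (subst (asm) ennreal_le_iff) auto
    have "h t = - eta * (p * y + (1 - p) * x)"
      unfolding h_def e0[symmetric] e1[symmetric] by (simp add: algebra_simps)
    also have "\<dots> \<le> - eta * (p * a1 + (1 - p) * a0)"
      using ineq eta by (simp add: mult_le_cancel_left)
    also have "\<dots> = h 0"
      unfolding h_def u0_def u1_def by (simp add: algebra_simps)
    finally show ?thesis .
  qed
  define D where "D = p * ((v1 - u1) / u1) + (1 - p) * ((v0 - u0) / u0)"
  have dl: "DERIV (\<lambda>t. ln ((1 - t) * w + t * z)) 0 :> (z - w) / w" if "w > 0" for w z :: real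
  proof -
    have "DERIV (\<lambda>t. (1 - t) * w + t * z) 0 :> z - w"
      by (auto intro!: derivative_eq_intros)
    from DERIV_chain2[OF DERIV_ln_divide this] that show ?thesis by simp
  qed
  have der: "DERIV h 0 :> D"
    unfolding h_def D_def
    by (intro DERIV_add DERIV_cmult dl pos)
  have "D \<le> 0"
  proof (rule ccontr)
    assume "\<not> D \<le> 0"
    then obtain d where d: "d > 0" "\<forall>k>0. k < d \<longrightarrow> h 0 < h (0 + k)"
      using DERIV_pos_inc_right[OF der] by auto
    have "h 0 < h (min (d/2) 1)" using d by auto
    moreover have "h (min (d/2) 1) \<le> h 0" using d by (intro hle) auto
    ultimately show False by simp
  qed
  hence "p * (v1 / u1) + (1 - p) * (v0 / u0) \<le> 1"
    using pos unfolding D_def by (simp add: diff_divide_distrib algebra_simps)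
  moreover have "v1 / u1 = exp (eta * (a1 - b1))" "v0 / u0 = exp (eta * (a0 - b0))"
    by (simp_all add: u0_def u1_def v0_def v1_def exp_diff[symmetric] algebra_simps)
  ultimately show ?thesis by simp
qed

lemma fin_mid:
  fixes l :: loss
  assumes lf: "loss_function l" and pr: "proper_loss l" and p: "p \<in> {0<..<1}"
  shows "l p True < \<infinity>" "l p False < \<infinity>"
proof -
  obtain g where g: "g \<in> {0..1}" "l g False < \<infinity>" "l g True < \<infinity>"
    using lf by (auto simp: loss_function_def)
  have "ennreal p * l p True + ennreal (1 - p) * l p False
          \<le> ennreal p * l g True + ennreal (1 - p) * l g False"
    using pr p g unfolding proper_loss_def by auto
  also have "\<dots> < \<infinity>" using g by (simp add: ennreal_mult_less_top)
  finally have *: "ennreal p * l p True + ennreal (1 - p) * l p False < \<infinity>" .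
  have "ennreal p * l p True < \<infinity>" "ennreal (1 - p) * l p False < \<infinity>"
    using * by (auto simp: top.not_eq_extremum)
  thus "l p True < \<infinity>" "l p False < \<infinity>" using p by (auto simp: ennreal_mult_less_top)
qed

lemma end0:
  fixes l :: loss
  assumes lf: "loss_function l" and pr: "proper_loss l"
  shows "\<And>g. g \<in> {0..1} \<Longrightarrow> l 0 False \<le> l g False" "l 0 False < \<infinity>"
proof -
  show A: "l 0 False \<le> l g False" if "g \<in> {0..1}" for g
    using pr that unfolding proper_loss_def by (drule_tac x=0 in bspec) auto
  obtain g where g: "g \<in> {0..1}" "l g False < \<infinity>" "l g True < \<infinity>"
    using lf by (auto simp: loss_function_def)
  show "l 0 False < \<infinity>" using A[of g] g by (meson order.strict_trans1)
qed

lemma end1: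
  fixes l :: loss
  assumes lf: "loss_function l" and pr: "proper_loss l"
  shows "\<And>g. g \<in> {0..1} \<Longrightarrow> l 1 True \<le> l g True" "l 1 True < \<infinity>"
proof -
  show A: "l 1 True \<le> l g True" if "g \<in> {0..1}" for g
    using pr that unfolding proper_loss_def by (drule_tac x=1 in bspec) auto
  obtain g where g: "g \<in> {0..1}" "l g False < \<infinity>" "l g True < \<infinity>"
    using lf by (auto simp: loss_function_def)
  show "l 1 True < \<infinity>" using A[of g] g by (meson order.strict_trans1)
qed

lemma lowb:
  fixes l :: loss
  assumes lf: "loss_function l" and pr: "proper_loss l" and mx: "mixable eta l"
    and p: "p \<in> {0<..<1}"
    and a0: "l p False = ennreal a0" and a1: "l p True = ennreal a1"
    and nn: "a0 \<ge> 0" "a1 \<ge> 0" and g: "g \<in> {0..1}"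
  shows "ennreal (a0 + ln (1 - p) / eta) \<le> l g False \<and> ennreal (a1 + ln p / eta) \<le> l g True"
proof -
  have eta: "eta > 0" using mx by (simp add: mixable_def)
  have mid: "ennreal (a0 + ln (1 - p) / eta) \<le> l g' False \<and> ennreal (a1 + ln p / eta) \<le> l g' True"
    if g': "g' \<in> {0<..<1}" for g'
  proof -
    obtain b0 where b0: "l g' False = ennreal b0" "b0 \<ge> 0"
      using fin_mid[OF lf pr g'] by (cases "l g' False") auto
    obtain b1 where b1: "l g' True = ennreal b1" "b1 \<ge> 0"
      using fin_mid[OF lf pr g'] by (cases "l g' True") auto
    have K: "p * exp (eta * (a1 - b1)) + (1 - p) * exp (eta * (a0 - b0)) \<le> 1"
      using key_fin[OF pr mx _ _ a0 a1 b0(1) b1(1) nn b0(2) b1(2)] p g' by auto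
    have pp: "0 < p" "0 < 1 - p" using p by auto
    have K0: "(1 - p) * exp (eta * (a0 - b0)) \<le> 1"
      using K pp by (smt (verit) exp_gt_zero mult_pos_pos)
    have K1: "p * exp (eta * (a1 - b1)) \<le> 1"
      using K pp by (smt (verit) exp_gt_zero mult_pos_pos)
    have "ln ((1 - p) * exp (eta * (a0 - b0))) \<le> ln 1"
      using K0 pp by (subst ln_le_cancel_iff) auto
    hence "ln (1 - p) + eta * (a0 - b0) \<le> 0" using pp by (simp add: ln_mult)
    hence c0: "a0 + ln (1 - p) / eta \<le> b0" using eta by (simp add: field_simps)
    have "ln (p * exp (eta * (a1 - b1))) \<le> ln 1"
      using K1 pp by (subst ln_le_cancel_iff) auto
    hence "ln p + eta * (a1 - b1) \<le> 0" using pp by (simp add: ln_mult)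
    hence c1: "a1 + ln p / eta \<le> b1" using eta by (simp add: field_simps)
    show ?thesis using c0 c1 b0 b1 by (auto intro: ennreal_leI)
  qed
  have cl: "closed ({0..1} \<inter> (\<lambda>g. l g b) -` {c..})" for b c
    proof (rule continuous_closed_preimage)
    show "continuous_on {0..1} (\<lambda>g. l g b)" using lf by (cases b) (auto simp: loss_function_def)
  qed auto
  have "closure {0<..<(1::real)} \<subseteq> {0..1} \<inter> (\<lambda>g. l g False) -` {ennreal (a0 + ln (1 - p) / eta)..}"
    by (rule closure_minimal[OF _ cl]) (use mid in auto)
  moreover have "closure {0<..<(1::real)} \<subseteq> {0..1} \<inter> (\<lambda>g. l g True) -` {ennreal (a1 + ln p / eta)..}"
    by (rule closure_minimal[OF _ cl]) (use mid in auto)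
  ultimately show ?thesis using g by auto
qed

lemma dfactor_fin:
  "0 \<le> ra \<Longrightarrow> 0 \<le> b' \<Longrightarrow> dfactor eta (ennreal ra) (ennreal b') = ennreal (exp (eta * (ra - b')))"
  by (simp add: dfactor_def)

lemma dfactor_top2: "a \<noteq> \<infinity> \<Longrightarrow> dfactor eta a \<infinity> = 0"
  by (simp add: dfactor_def)

lemma dfactor_le1:
  assumes "a \<le> b" "a < \<infinity>" "eta > 0"
  shows "dfactor eta a b \<le> 1"
proof (cases "b = \<infinity>")
  case True thus ?thesis using assms by (simp add: dfactor_def)
next
  case False
  hence "enn2real a \<le> enn2real b" using assms by (intro enn2real_mono) (auto simp: top.not_eq_extremum)
  hence "exp (eta * (enn2real a - enn2real b)) \<le> 1" using assms
    by (simp add: mult_nonneg_nonpos)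
  thus ?thesis using False assms by (auto simp: dfactor_def ennreal_leI[where y=1, simplified])
qed

lemma key:
  fixes l :: loss
  assumes lf: "loss_function l" and pr: "proper_loss l" and mx: "mixable eta l"
    and p: "p \<in> {0..1}" and g: "g \<in> {0..1}"
  shows "ennreal p * dfactor eta (l p True) (l g True) + ennreal (1 - p) * dfactor eta (l p False) (l g False) \<le> 1"
proof -
  have eta: "eta > 0" using mx by (simp add: mixable_def)
  consider "p = 0" | "p = 1" | "p \<in> {0<..<1}" using p by fastforce
  then show ?thesis
  proof cases
    case 1
    thus ?thesis using end0[OF lf pr] g eta by (simp add: dfactor_le1)
  next
    case 2
    thus ?thesis using end1[OF lf pr] g eta by (simp add: dfactor_le1)
  next
    case 3
    obtain a0 where a0: "l p False = ennreal a0" "a0 \<ge> 0"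
      using fin_mid[OF lf pr 3] by (cases "l p False") auto
    obtain a1 where a1: "l p True = ennreal a1" "a1 \<ge> 0"
      using fin_mid[OF lf pr 3] by (cases "l p True") auto
    have pp: "0 < p" "0 < 1 - p" using 3 by auto
    note LB = lowb[OF lf pr mx 3 a0(1) a1(1) a0(2) a1(2) g]
    show ?thesis
    proof (cases "l g True = \<infinity>")
      case T: True
      hence "l g False \<noteq> \<infinity>" using lf g by (auto simp: loss_function_def)
      then obtain b0 where b0: "l g False = ennreal b0" "b0 \<ge> 0" by (cases "l g False") auto
      have "a0 + ln (1 - p) / eta \<le> b0" using LB b0 by (smt (verit) ennreal_le_iff ennreal_neg)
      hence "eta * (a0 - b0) \<le> - ln (1 - p)" using eta by (simp add: field_simps)
      hence "exp (eta * (a0 - b0)) \<le> exp (- ln (1 - p))" by simp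
      also have "\<dots> = 1 / (1 - p)" using pp by (simp add: exp_minus divide_inverse)
      finally have "(1 - p) * exp (eta * (a0 - b0)) \<le> 1" using pp by (simp add: field_simps)
      thus ?thesis using T a0 a1 b0 pp
        by (simp add: dfactor_def ennreal_mult[symmetric] ennreal_leI[where y=1, simplified])
    next
      case T: False
      show ?thesis
      proof (cases "l g False = \<infinity>")
        case F: True
        then obtain b1 where b1: "l g True = ennreal b1" "b1 \<ge> 0" using T by (cases "l g True") auto
        have "a1 + ln p / eta \<le> b1" using LB b1 by (smt (verit) ennreal_le_iff ennreal_neg)
        hence "eta * (a1 - b1) \<le> - ln p" using eta by (simp add: field_simps)
        hence "exp (eta * (a1 - b1)) \<le> exp (- ln p)" by simp
        also have "\<dots> = 1 / p" using pp by (simp add: exp_minus divide_inverse)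
        finally have "p * exp (eta * (a1 - b1)) \<le> 1" using pp by (simp add: field_simps)
        thus ?thesis using F a0 a1 b1 pp
          by (simp add: dfactor_def ennreal_mult[symmetric] ennreal_leI[where y=1, simplified])
      next
        case F: False
        obtain b0 where b0: "l g False = ennreal b0" "b0 \<ge> 0" using F by (cases "l g False") auto
        obtain b1 where b1: "l g True = ennreal b1" "b1 \<ge> 0" using T by (cases "l g True") auto
        have K: "p * exp (eta * (a1 - b1)) + (1 - p) * exp (eta * (a0 - b0)) \<le> 1"
          using key_fin[OF pr mx p g a0(1) a1(1) b0(1) b1(1) a0(2) a1(2) b0(2) b1(2)] .
        have "ennreal p * dfactor eta (l p True) (l g True) + ennreal (1 - p) * dfactor eta (l p False) (l g False)
              = ennreal (p * exp (eta * (a1 - b1)) + (1 - p) * exp (eta * (a0 - b0)))"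
          using a0 a1 b0 b1 pp by (simp add: dfactor_fin ennreal_mult ennreal_plus)
        thus ?thesis using K by (simp add: ennreal_leI[where y=1, simplified])
      qed
    qed
  qed
qed

lemma final_bound:
  assumes eta: "eta > 0" and K: "K \<ge> 1" and fin: "finite A"
    and P: "(\<Prod>s\<in>A. dfactor eta (a s) (b s)) \<le> ennreal K"
  shows "(\<Sum>s\<in>A. a s) \<le> (\<Sum>s\<in>A. b s) + ennreal (ln K / eta)"
proof (cases "\<exists>s\<in>A. b s = \<infinity>")
  case True
  hence "(\<Sum>s\<in>A. b s) = \<infinity>" using fin by (simp add: ennreal_sum_eq_top)
  thus ?thesis by simp
next
  case bf: False
  show ?thesis
  proof (cases "\<exists>s\<in>A. a s = \<infinity>")
    case True
    have "(\<Prod>s\<in>A. dfactor eta (a s) (b s)) = top"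
      unfolding ennreal_prod_eq_top using fin True bf
      by (auto simp: dfactor_def)
    thus ?thesis using P by (simp add: top_unique)
  next
    case af: False
    define ra where "ra s = enn2real (a s)" for s
    define rb where "rb s = enn2real (b s)" for s
    have ea: "a s = ennreal (ra s)" if "s \<in> A" for s
      using af that by (simp add: ra_def top.not_eq_extremum)
    have eb: "b s = ennreal (rb s)" if "s \<in> A" for s
      using bf that by (simp add: rb_def top.not_eq_extremum)
    have nn: "ra s \<ge> 0" "rb s \<ge> 0" for s by (auto simp: ra_def rb_def)
    have "(\<Prod>s\<in>A. dfactor eta (a s) (b s)) = (\<Prod>s\<in>A. ennreal (exp (eta * (ra s - rb s))))"
      by (rule prod.cong) (auto simp: ea eb nn dfactor_fin)
    also have "\<dots> = ennreal (exp (\<Sum>s\<in>A. eta * (ra s - rb s)))"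
      by (simp add: prod_ennreal exp_sum fin)
    finally have "exp (\<Sum>s\<in>A. eta * (ra s - rb s)) \<le> K" using P K by simp
    hence "(\<Sum>s\<in>A. eta * (ra s - rb s)) \<le> ln K"
      using K by (metis exp_le_cancel_iff exp_ln less_le_trans zero_less_one)
    hence "eta * ((\<Sum>s\<in>A. ra s) - (\<Sum>s\<in>A. rb s)) \<le> ln K"
      by (simp add: sum_distrib_left[symmetric] sum_subtractf)
    hence le: "(\<Sum>s\<in>A. ra s) \<le> (\<Sum>s\<in>A. rb s) + ln K / eta"
      using eta by (simp add: field_simps)
    have "(\<Sum>s\<in>A. a s) = ennreal (\<Sum>s\<in>A. ra s)"
      by (simp add: ea nn sum_ennreal)
    also have "\<dots> \<le> ennreal ((\<Sum>s\<in>A. rb s) + ln K / eta)" using le by (rule ennreal_leI)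
    also have "\<dots> = (\<Sum>s\<in>A. b s) + ennreal (ln K / eta)"
      using K eta by (simp add: eb nn sum_ennreal ennreal_plus sum_nonneg)
    finally show ?thesis .
  qed
qed

lemma ediff_le: "b \<noteq> \<infinity> \<Longrightarrow> ediff a b \<le> 0 \<longleftrightarrow> a \<le> b"
  by (cases a; cases b) (auto simp: ediff_def ennreal_neg top_unique)

lemma ediff_eq: "b \<noteq> \<infinity> \<Longrightarrow> ediff a b = ediff c b \<Longrightarrow> a = c"
  by (cases a; cases b; cases c) (auto simp: ediff_def ennreal_neg)

lemma Qnm_step:
  "Qnm lam eta gam (prd(Suc t := p)) (om(Suc t := w)) (Suc t) n m
     = Qnm lam eta gam prd om t n m * dfactor (eta m) (lam m p w) (lam m (gam (Suc t) n) w)"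
proof -
  have "(\<Prod>s\<in>{1..t}. dfactor (eta m) (lam m ((prd(Suc t := p)) s) ((om(Suc t := w)) s)) (lam m (gam s n) ((om(Suc t := w)) s)))
      = (\<Prod>s\<in>{1..t}. dfactor (eta m) (lam m (prd s) (om s)) (lam m (gam s n) (om s)))"
    by (rule prod.cong) auto
  thus ?thesis unfolding Qnm_def by (simp add: mult.commute)
qed

lemma mix_sum:
  fixes c :: ennreal
  shows "a * (c * sum f I) + b * (c * sum g I) = c * (\<Sum>x\<in>I. a * f x + b * g x)"
  by (simp add: sum.distrib sum_distrib_left distrib_left mult.left_commute)

lemma Qt_le1:
  fixes M N :: nat
    and lam :: "nat \<Rightarrow> loss" and eta :: "nat \<Rightarrow> real"
    and gam :: "nat \<Rightarrow> nat \<Rightarrow> real" and prd :: "nat \<Rightarrow> real" and om :: "nat \<Rightarrow> bool"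
  assumes losses: "\<forall>m\<in>{1..M}. loss_function (lam m) \<and> proper_loss (lam m)
                        \<and> eta m > 0 \<and> mixable (eta m) (lam m)"
    and experts: "\<forall>t\<ge>1. \<forall>n\<in>{1..N}. gam t n \<in> {0..1}"
    and learner: "follows_DF M N lam eta gam prd om"
    and MN: "M \<ge> 1" "N \<ge> 1"
  shows "Qt M N lam eta gam prd om t \<le> 1"
proof (induction t)
  case 0
  have "Qt M N lam eta gam prd om 0 = ennreal (1 / (real M * real N)) * of_nat (N * M)"
    by (simp add: Qt_def Qnm_def)
  also have "\<dots> = 1" using MN
    by (simp add: ennreal_of_nat_eq_real_of_nat ennreal_mult[symmetric])
  finally show ?case by simp
next
  case (Suc t)
  define c where "c = ennreal (1 / (real M * real N))"
  define I where "I = {1..N} \<times> {1..M}"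
  define G where "G p w = Qt M N lam eta gam (prd(Suc t := p)) (om(Suc t := w)) (Suc t)" for p w
  define Q where "Q = Qt M N lam eta gam prd om t"
  define d where "d p w x = (case x of (n, m) \<Rightarrow> dfactor (eta m) (lam m p w) (lam m (gam (Suc t) n) w))" for p w x
  define q where "q x = (case x of (n, m) \<Rightarrow> Qnm lam eta gam prd om t n m)" for x
  have G_eq: "G p w = c * (\<Sum>x\<in>I. q x * d p w x)" for p w
    unfolding G_def Qt_def c_def I_def q_def d_def by (simp add: Qnm_step split_def)
  have Q_eq: "Q = c * (\<Sum>x\<in>I. q x)"
    unfolding Q_def Qt_def c_def I_def q_def by (simp add: split_def)
  have QI: "Q \<noteq> \<infinity>" using Suc.IH unfolding Q_def by (auto simp: top_unique)
  have A: "ennreal p * G p True + ennreal (1 - p) * G p False \<le> Q" if p: "p \<in> {0..1}" for p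
  proof -
    have "ennreal p * G p True + ennreal (1 - p) * G p False
        = c * (\<Sum>x\<in>I. ennreal p * (q x * d p True x) + ennreal (1 - p) * (q x * d p False x))"
      unfolding G_eq by (rule mix_sum)
    also have "\<dots> \<le> c * (\<Sum>x\<in>I. q x)"
    proof (intro mult_left_mono sum_mono)
      fix x assume x: "x \<in> I"
      obtain n m where nm: "x = (n, m)" by (cases x)
      have lm: "loss_function (lam m)" "proper_loss (lam m)" "mixable (eta m) (lam m)"
        using losses x nm by (auto simp: I_def)
      have gn: "gam (Suc t) n \<in> {0..1}" using experts x nm by (auto simp: I_def)
      have K: "ennreal p * d p True x + ennreal (1 - p) * d p False x \<le> 1"
        unfolding d_def nm using key[OF lm p gn] by simp
      have "ennreal p * (q x * d p True x) + ennreal (1 - p) * (q x * d p False x)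
          = q x * (ennreal p * d p True x + ennreal (1 - p) * d p False x)"
        by (simp add: distrib_left mult.left_commute)
      also have "\<dots> \<le> q x * 1" by (rule mult_left_mono[OF K]) simp
      finally show "ennreal p * (q x * d p True x) + ennreal (1 - p) * (q x * d p False x) \<le> q x" by simp
    qed simp
    finally show ?thesis unfolding Q_eq .
  qed
  have ft_eq: "ft M N lam eta gam prd om (Suc t) p w = ediff (G p w) Q" for p w
    by (simp add: ft_def G_def Q_def)
  have DF: "prd (Suc t) \<in> {0..1} \<and>
     (if ft M N lam eta gam prd om (Suc t) 0 True \<le> 0 then prd (Suc t) = 0
       else if ft M N lam eta gam prd om (Suc t) 1 False \<le> 0 then prd (Suc t) = 1
       else ft M N lam eta gam prd om (Suc t) (prd (Suc t)) False = ft M N lam eta gam prd om (Suc t) (prd (Suc t)) True)"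
    using learner unfolding follows_DF_def Let_def by (erule_tac x="Suc t" in allE) simp
  have both: "G (prd (Suc t)) True \<le> Q \<and> G (prd (Suc t)) False \<le> Q"
  proof (cases "G 0 True \<le> Q")
    case True
    hence "prd (Suc t) = 0" using DF by (simp add: ft_eq ediff_le[OF QI])
    moreover have "G 0 False \<le> Q" using A[of 0] by simp
    ultimately show ?thesis using True by simp
  next
    case F1: False
    show ?thesis
    proof (cases "G 1 False \<le> Q")
      case True
      hence "prd (Suc t) = 1" using DF F1 by (simp add: ft_eq ediff_le[OF QI])
      moreover have "G 1 True \<le> Q" using A[of 1] by simp
      ultimately show ?thesis using True by simp
    next
      case False
      hence eq: "G (prd (Suc t)) False = G (prd (Suc t)) True"
        using DF F1 by (auto simp: ft_eq ediff_le[OF QI] intro: ediff_eq[OF QI])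
      have p: "prd (Suc t) \<in> {0..1}" using DF by simp
      have "(ennreal (prd (Suc t)) + ennreal (1 - prd (Suc t))) * G (prd (Suc t)) True \<le> Q"
        using A[OF p] eq by (simp add: distrib_right)
      moreover have "ennreal (prd (Suc t)) + ennreal (1 - prd (Suc t)) = 1"
        using p by (simp add: ennreal_plus[symmetric] del: ennreal_plus)
      ultimately show ?thesis using eq by simp
    qed
  qed
  have "Qt M N lam eta gam prd om (Suc t) = G (prd (Suc t)) (om (Suc t))"
    by (simp add: G_def)
  also have "\<dots> \<le> Q" using both by (cases "om (Suc t)") auto
  also have "\<dots> \<le> 1" using Suc.IH unfolding Q_def .
  finally show ?case .
qed

theorem corollary3:
  fixes M N :: nat
    and lam :: "nat \<Rightarrow> loss" and eta :: "nat \<Rightarrow> real"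
    and gam :: "nat \<Rightarrow> nat \<Rightarrow> real" and prd :: "nat \<Rightarrow> real" and om :: "nat \<Rightarrow> bool"
  assumes losses: "\<forall>m\<in>{1..M}. loss_function (lam m) \<and> proper_loss (lam m)
                        \<and> eta m > 0 \<and> mixable (eta m) (lam m)"
    and experts: "\<forall>t\<ge>1. \<forall>n\<in>{1..N}. gam t n \<in> {0..1}"
    and learner: "follows_DF M N lam eta gam prd om"
  shows "\<forall>t n m. n \<in> {1..N} \<longrightarrow> m \<in> {1..M} \<longrightarrow>
           (\<Sum>s\<in>{1..t}. lam m (prd s) (om s))
             \<le> (\<Sum>s\<in>{1..t}. lam m (gam s n) (om s)) + ennreal (ln (real M * real N) / eta m)"
proof (intro allI impI)
  fix t n m assume n: "n \<in> {1..N}" and m: "m \<in> {1..M}"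
  have MN: "M \<ge> 1" "N \<ge> 1" using n m by auto
  have Q1: "Qt M N lam eta gam prd om t \<le> 1" by (rule Qt_le1[OF losses experts learner MN])
  have "Qnm lam eta gam prd om t n m
      \<le> (\<Sum>(n, m)\<in>{1..N} \<times> {1..M}. Qnm lam eta gam prd om t n m)"
    using member_le_sum[of "(n, m)" "{1..N} \<times> {1..M}" "\<lambda>(n, m). Qnm lam eta gam prd om t n m"] n m
    by simp
  hence "ennreal (1 / (real M * real N)) * Qnm lam eta gam prd om t n m \<le> 1"
    using Q1 unfolding Qt_def by (meson mult_left_mono order_trans zero_le)
  hence "ennreal (real M * real N) * (ennreal (1 / (real M * real N)) * Qnm lam eta gam prd om t n m)
       \<le> ennreal (real M * real N) * 1" by (rule mult_left_mono) simp
  moreover have "ennreal (real M * real N) * ennreal (1 / (real M * real N)) = 1"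
    using MN by (simp add: ennreal_mult[symmetric])
  ultimately have P: "Qnm lam eta gam prd om t n m \<le> ennreal (real M * real N)"
    by (simp add: mult.assoc[symmetric])
  have eta: "eta m > 0" using losses m by auto
  have K: "real M * real N \<ge> 1" proof -
    have "(1::real) \<le> real M" "(1::real) \<le> real N" using MN by auto
    thus ?thesis by (metis mult_mono mult_1_left zero_le_one order_trans)
  qed
  show "(\<Sum>s\<in>{1..t}. lam m (prd s) (om s))
             \<le> (\<Sum>s\<in>{1..t}. lam m (gam s n) (om s)) + ennreal (ln (real M * real N) / eta m)"
    by (rule final_bound[OF eta K _ P[unfolded Qnm_def]]) simp
qed

end
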